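(* Let $h:J\to\mathbb{R}$ be a non-negative function, where $J\subseteq\mathbb{R}$ is an interval with $[0,1]\subseteq J$, and assume $h$ is Lebesgue integrable on $[0,1]$. Let $I\subset[0,\infty)$ be an open interval, let $a,b\in I$ with $a<b$, and let $f:I\to\mathbb{R}$ be three times differentiable on $I$ with $f'''\in L_1[a,b]$. Let $q>1$. If $|f'''|^q$ is $h$-convex on $[a,b]$, then $$\left|\int_a^b f(x)\,dx-\frac{b-a}{6}\left[f(a)+4f\left(\frac{a+b}{2}\right)+f(b)\right]\right|\le \frac{(b-a)^4}{6}\left(\frac{1}{192}\right)^{1-\frac1q}\Bigl\{\bigl[K_1|f'''(a)|^q+K_2|f'''(b)|^q\bigr]^{1/q}+\bigl[K_2|f'''(a)|^q+K_1|f'''(b)|^q\bigr]^{1/q}\Bigr\},$$ where $K_1=\int_0^{1/2}t^2\left(\frac12-t\right)h(t)\,dt$ and $K_2=\int_0^{1/2}t^2\left(\frac12-t\right)h(1-t)\,dt$.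
   Context: Given a non-negative function $h$ defined on an interval containing $[0,1]$, a function $g:[a,b]\to\mathbb{R}$ is called $h$-convex on $[a,b]$ if $g$ is non-negative and for all $x,y\in[a,b]$ and $t\in[0,1]$, $$g(tx+(1-t)y)\le h(t)\,g(x)+h(1-t)\,g(y).$$ *)

theory Defs
  imports "HOL-Analysis.Analysis"
begin

definition h_convex_on :: "(real \<Rightarrow> real) \<Rightarrow> real \<Rightarrow> real \<Rightarrow> (real \<Rightarrow> real) \<Rightarrow> bool" where
  "h_convex_on h a b g \<longleftrightarrow>
     (\<forall>x\<in>{a..b}. 0 \<le> g x) \<and>
     (\<forall>x\<in>{a..b}. \<forall>y\<in>{a..b}. \<forall>t\<in>{0..1}.
        g (t * x + (1 - t) * y) \<le> h t * g x + h (1 - t) * g y)"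

end

theory Submission
  imports Defs
begin



lemma sub_left:
  fixes \<phi> :: "real \<Rightarrow> real"
  assumes "(\<phi> has_integral K) {0..1/2}" "a < b"
  shows "((\<lambda>x. \<phi> ((x-a)/(b-a))) has_integral ((b-a)*K)) {a..(a+b)/2}"
proof -
  have m: "1/(b-a) > 0" using assms by simp
  have F: "((\<lambda>x. \<phi> ((1/(b-a)) *\<^sub>R x + (-a/(b-a)))) has_integral (K /\<^sub>R (1/(b-a)) ^ DIM(real)))
      (cbox ((0 - (-a/(b-a))) /\<^sub>R (1/(b-a))) ((1/2 - (-a/(b-a))) /\<^sub>R (1/(b-a))))"
    by (rule has_integral_affinity'[OF assms(1)[unfolded cbox_interval[symmetric]] m])
  have e: "(0 - -a/(b-a)) /\<^sub>R (1/(b-a)) = a" "(1/2 - -a/(b-a)) /\<^sub>R (1/(b-a)) = (a+b)/2"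
     "K /\<^sub>R (1/(b-a)) ^ DIM(real) = (b-a)*K"
    using assms by (auto simp: field_simps)
  have e2: "(\<lambda>x. \<phi> ((1/(b-a)) *\<^sub>R x + (-a/(b-a)))) = (\<lambda>x. \<phi> ((x-a)/(b-a)))"
    using assms by (intro ext arg_cong[where f=\<phi>]) (auto simp: diff_divide_distrib)
  show ?thesis using F unfolding e e2 cbox_interval .
qed

lemma sub_right:
  fixes \<phi> :: "real \<Rightarrow> real"
  assumes "(\<phi> has_integral K) {0..1/2}" "a < b"
  shows "((\<lambda>x. \<phi> ((b-x)/(b-a))) has_integral ((b-a)*K)) {(a+b)/2..b}"
proof -
  have r: "((\<lambda>x. \<phi> (-x)) has_integral K) {-(1/2)..-0}"
    using assms(1) by (subst has_integral_reflect_real) 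
  have m: "1/(b-a) > 0" using assms by simp
  have F: "((\<lambda>x. (\<lambda>x. \<phi> (-x)) ((1/(b-a)) *\<^sub>R x + (-b/(b-a)))) has_integral (K /\<^sub>R (1/(b-a)) ^ DIM(real)))
      (cbox ((-(1/2) - (-b/(b-a))) /\<^sub>R (1/(b-a))) ((-0 - (-b/(b-a))) /\<^sub>R (1/(b-a))))"
    by (rule has_integral_affinity'[OF r[unfolded cbox_interval[symmetric]] m])
  have e: "(-(1/2) - -b/(b-a)) /\<^sub>R (1/(b-a)) = (a+b)/2" "(-0 - -b/(b-a)) /\<^sub>R (1/(b-a)) = b"
     "K /\<^sub>R (1/(b-a)) ^ DIM(real) = (b-a)*K"
    using assms by (auto simp: field_simps)
  have e2: "(\<lambda>x. (\<lambda>x. \<phi> (-x)) ((1/(b-a)) *\<^sub>R x + (-b/(b-a)))) = (\<lambda>x. \<phi> ((b-x)/(b-a)))"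
    using assms by (intro ext arg_cong[where f=\<phi>]) (auto simp: diff_divide_distrib)
  show ?thesis using F unfolding e e2 cbox_interval .
qed



lemma young_pt:
  fixes q l y :: real
  assumes q: "q > 1" and l: "l > 0" and y: "y \<ge> 0"
  shows "y \<le> l * (1 - 1/q) + l powr (1 - q) * y powr q / q"
proof -
  define p where "p = q/(q-1)"
  have p: "p > 1" "1/p + 1/q = 1" using q by (auto simp: p_def field_simps)
  have Yng: "l powr (1/p) * (y * l powr (-1/p)) \<le> (l powr (1/p)) powr p / p + (y * l powr (-1/p)) powr q / q"
    by (rule Youngs_inequality) (use p q y in auto)
  have E1: "l powr (1/p) * (y * l powr (-1/p)) = y"
  proof -
    have "l powr (1/p) * l powr (-1/p) = l powr (1/p + -1/p)" by (rule powr_add[symmetric])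
    also have "\<dots> = 1" using l by simp
    finally show ?thesis by (simp add: algebra_simps)
  qed
  have E2: "(l powr (1/p)) powr p / p = l * (1 - 1/q)"
    using p l q by (simp add: powr_powr p_def field_simps)
  have E3: "(y * l powr (-1/p)) powr q = y powr q * l powr (1 - q)"
  proof -
    have ex: "-1/p * q = 1 - q" using q by (simp add: p_def field_simps)
    have "(y * l powr (-1/p)) powr q = y powr q * (l powr (-1/p)) powr q" using y l by (simp add: powr_mult)
    also have "\<dots> = y powr q * l powr (-1/p * q)" by (simp only: powr_powr)
    also have "\<dots> = y powr q * l powr (1-q)" by (simp only: ex)
    finally show ?thesis .
  qed
  from Yng have "y \<le> (l powr (1/p)) powr p / p + (y * l powr (-1/p)) powr q / q" unfolding E1 .
  then show ?thesis unfolding E2 E3 by (simp add: mult.commute)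
qed

lemma eps_opt:
  fixes X A C q :: real
  assumes q: "q > 1" and A: "A > 0" and C: "C \<ge> 0"
    and H: "\<And>l. l > 0 \<Longrightarrow> X \<le> l * (1 - 1/q) * A + l powr (1 - q) * C / q"
  shows "X \<le> A powr (1 - 1/q) * C powr (1/q)"
proof (cases "C = 0")
  case True
  show ?thesis
  proof (rule ccontr)
    assume "\<not> ?thesis"
    then have X: "X > 0" using True q by simp
    define d where "d = 1 - 1/q"
    have d: "d > 0" using q by (simp add: d_def)
    define l where "l = X / (2 * d * A)"
    then have l: "l > 0" using X A d by (simp add: l_def)
    have "X \<le> l * d * A" using H[OF l] True by (simp add: d_def)
    also have "\<dots> = X/2" using A d by (simp add: l_def field_simps)
    finally show False using X by simp
  qed
next
  case False
  then have C: "C > 0" using C by simp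
  define l where "l = (C/A) powr (1/q)"
  have l: "l > 0" using C A by (simp add: l_def)
  have X: "X \<le> l * (1 - 1/q) * A + l powr (1 - q) * C / q" by (rule H[OF l])
  have e1: "l * A = A powr (1 - 1/q) * C powr (1/q)"
  proof -
    have "A = A powr (1/q + (1 - 1/q))" using A by simp
    also have "\<dots> = A powr (1/q) * A powr (1 - 1/q)" by (rule powr_add)
    finally have "A = A powr (1/q) * A powr (1 - 1/q)" .
    then show ?thesis
      using A C q by (simp add: l_def powr_divide field_simps)
  qed
  have e2: "l powr (1 - q) * C = A powr (1 - 1/q) * C powr (1/q)"
  proof -
    have "l powr (1 - q) = (C/A) powr ((1-q)/q)" using C A by (simp add: l_def powr_powr)
    also have "(1-q)/q = 1/q - 1" using q by (simp add: field_simps)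
    finally have "l powr (1-q) * C = C powr (1/q - 1) * C * A powr (1 - 1/q)"
      using A C by (simp add: powr_divide powr_diff powr_minus field_simps)
    also have "C powr (1/q - 1) * C = C powr (1/q)"
      using C by (simp add: powr_diff)
    finally show ?thesis by simp
  qed
  have "X \<le> (1 - 1/q) * (l * A) + (l powr (1 - q) * C) / q" using X by (simp add: algebra_simps)
  also have "\<dots> = A powr (1 - 1/q) * C powr (1/q)" unfolding e1 e2 using q by (simp add: field_simps)
  finally show ?thesis .
qed

lemma holder_like:
  fixes w F H :: "real \<Rightarrow> real" and S :: "real set" and q A C :: real
  assumes q: "q > 1" and iF: "(\<lambda>x. w x * F x) integrable_on S"
    and iw: "(w has_integral A) S" and A: "A > 0"
    and iH: "((\<lambda>x. w x * H x) has_integral C) S"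
    and w0: "\<And>x. x \<in> S \<Longrightarrow> 0 \<le> w x"
    and F0: "\<And>x. x \<in> S \<Longrightarrow> 0 \<le> F x"
    and FH: "\<And>x. x \<in> S \<Longrightarrow> F x powr q \<le> H x"
  shows "integral S (\<lambda>x. w x * F x) \<le> A powr (1 - 1/q) * C powr (1/q)"
proof (rule eps_opt[OF q A])
  show "C \<ge> 0"
  proof (rule has_integral_nonneg[OF iH])
    fix x assume x: "x \<in> S"
    have "0 \<le> F x powr q" by simp
    then have "0 \<le> H x" using FH[OF x] by linarith
    then show "0 \<le> w x * H x" using w0[OF x] by simp
  qed
  fix l :: real assume l: "l > 0"
  have hI: "((\<lambda>x. l * (1 - 1/q) * w x + l powr (1 - q) / q * (w x * H x)) has_integral
      (l * (1 - 1/q) * A + l powr (1 - q) / q * C)) S"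
    by (intro has_integral_add has_integral_mult_right iw iH)
  have "integral S (\<lambda>x. w x * F x) \<le> integral S (\<lambda>x. l * (1 - 1/q) * w x + l powr (1 - q) / q * (w x * H x))"
  proof (rule integral_le[OF iF])
    show "(\<lambda>x. l * (1 - 1/q) * w x + l powr (1 - q) / q * (w x * H x)) integrable_on S"
      using hI by (rule has_integral_integrable)
    fix x assume x: "x \<in> S"
    have "F x \<le> l * (1 - 1/q) + l powr (1 - q) * F x powr q / q" by (rule young_pt[OF q l F0[OF x]])
    also have "\<dots> \<le> l * (1 - 1/q) + l powr (1 - q) * H x / q"
      using FH[OF x] q by (simp add: divide_right_mono mult_left_mono)
    finally have "w x * F x \<le> w x * (l * (1 - 1/q) + l powr (1 - q) * H x / q)"
      using w0[OF x] by (rule mult_left_mono)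
    then show "w x * F x \<le> l * (1 - 1/q) * w x + l powr (1 - q) / q * (w x * H x)"
      by (simp add: algebra_simps)
  qed
  also have "\<dots> = l * (1 - 1/q) * A + l powr (1 - q) / q * C"
    using hI by (rule integral_unique)
  finally show "integral S (\<lambda>x. w x * F x) \<le> l * (1 - 1/q) * A + l powr (1 - q) * C / q" by simp
qed



lemma ftc3:
  fixes f f1 f2 f3 k k1 k2 :: "real \<Rightarrow> real"
  assumes sub: "{u..v} \<subseteq> I" and uv: "u \<le> v"
    and d1: "\<forall>x\<in>I. (f has_real_derivative f1 x) (at x)"
    and d2: "\<forall>x\<in>I. (f1 has_real_derivative f2 x) (at x)"
    and d3: "\<forall>x\<in>I. (f2 has_real_derivative f3 x) (at x)"
    and k0: "\<And>x. (k has_real_derivative k1 x) (at x)"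
    and k1: "\<And>x. (k1 has_real_derivative k2 x) (at x)"
    and k2: "\<And>x. (k2 has_real_derivative -1) (at x)"
  shows "((\<lambda>x. k x * f3 x) has_integral
     ((k v * f2 v - k1 v * f1 v + k2 v * f v) - (k u * f2 u - k1 u * f1 u + k2 u * f u) + integral {u..v} f)) {u..v}"
proof -
  define G where "G x = k x * f2 x - k1 x * f1 x + k2 x * f x" for x
  have dG: "(G has_real_derivative (k x * f3 x - f x)) (at x)" if x: "x \<in> I" for x
  proof -
    have "(G has_real_derivative ((k x * f3 x + k1 x * f2 x) - (k1 x * f2 x + k2 x * f1 x) + (k2 x * f1 x + -1 * f x))) (at x)"
      unfolding G_def
      by (intro DERIV_add DERIV_diff DERIV_mult'[OF k0 d3[rule_format, OF x]]
        DERIV_mult'[OF k1 d2[rule_format, OF x]] DERIV_mult'[OF k2 d1[rule_format, OF x]])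
    then show ?thesis by (simp add: algebra_simps)
  qed
  have i1: "((\<lambda>x. k x * f3 x - f x) has_integral (G v - G u)) {u..v}"
  proof (rule fundamental_theorem_of_calculus[OF uv])
    fix x assume "x \<in> {u..v}"
    then have "x \<in> I" using sub by auto
    then show "(G has_vector_derivative k x * f3 x - f x) (at x within {u..v})"
      using dG by (simp add: has_real_derivative_iff_has_vector_derivative[symmetric] has_field_derivative_at_within)
  qed
  have "continuous_on {u..v} f"
  proof (rule continuous_at_imp_continuous_on, rule ballI)
    fix x assume "x \<in> {u..v}"
    then have "x \<in> I" using sub by auto
    then show "isCont f x" using d1 DERIV_isCont by blast
  qed
  then have "f integrable_on {u..v}" by (rule integrable_continuous_real)
  then have i2: "(f has_integral integral {u..v} f) {u..v}" by (rule integrable_integral)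
  have "((\<lambda>x. (k x * f3 x - f x) + f x) has_integral (G v - G u + integral {u..v} f)) {u..v}"
    by (rule has_integral_add[OF i1 i2])
  then show ?thesis by (simp add: G_def)
qed



lemma cont_times_abs:
  fixes p \<psi> :: "real \<Rightarrow> real"
  assumes "continuous_on {u..v} p" "\<psi> absolutely_integrable_on {u..v}"
  shows "(\<lambda>x. p x * \<psi> x) absolutely_integrable_on {u..v}"
proof (rule absolutely_integrable_bounded_measurable_product_real)
  show "p \<in> borel_measurable (lebesgue_on {u..v})"
    by (rule continuous_imp_measurable_on_sets_lebesgue[OF assms(1)]) simp
  show "bounded (p ` {u..v})"
    by (rule compact_imp_bounded[OF compact_continuous_image[OF assms(1) compact_Icc]])
qed (use assms in auto)

lemma abs_abs_int:
  fixes \<psi> :: "real \<Rightarrow> real"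
  assumes "\<psi> absolutely_integrable_on S"
  shows "(\<lambda>x. \<bar>\<psi> x\<bar>) absolutely_integrable_on S"
proof (rule nonnegative_absolutely_integrable_1)
  show "(\<lambda>x. \<bar>\<psi> x\<bar>) integrable_on S"
    using assms unfolding absolutely_integrable_on_def by simp
qed simp

lemma reflect01:
  fixes \<psi> :: "real \<Rightarrow> real"
  assumes "(\<psi> has_integral i) {0..1}"
  shows "((\<lambda>t. \<psi> (1 - t)) has_integral i) {0..1}"
proof -
  have r: "((\<lambda>x. \<psi> (-x)) has_integral i) {-1..-0}"
    using assms by (subst has_integral_reflect_real)
  have m: "(1::real) > 0" by simp
  have F: "((\<lambda>x. (\<lambda>x. \<psi> (-x)) (1 *\<^sub>R x + (-1))) has_integral (i /\<^sub>R 1 ^ DIM(real)))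
      (cbox ((-1 - (-1)) /\<^sub>R 1) ((-0 - (-1)) /\<^sub>R (1::real)))"
    by (rule has_integral_affinity'[OF r[unfolded cbox_interval[symmetric]] m])
  have e: "(-1 - (-1)) /\<^sub>R 1 = (0::real)" "(-0 - (-1)) /\<^sub>R 1 = (1::real)" "i /\<^sub>R 1 ^ DIM(real) = i"
    by auto
  have e2: "(\<lambda>x. (\<lambda>x. \<psi> (-x)) (1 *\<^sub>R x + (-1))) = (\<lambda>t. \<psi> (1 - t))"
    by (intro ext arg_cong[where f=\<psi>]) auto
  show ?thesis using F unfolding e e2 cbox_interval .
qed

lemma poly_int: "((\<lambda>t::real. t^2 * (1/2 - t)) has_integral 1/192) {0..1/2}"
proof -
  have "((\<lambda>t::real. t^2 * (1/2 - t)) has_integral ((\<lambda>t. t^3/6 - t^4/4) (1/2) - (\<lambda>t. t^3/6 - t^4/4) 0)) {0..1/2}"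
  proof (rule fundamental_theorem_of_calculus)
    fix x :: real
    have "((\<lambda>t::real. t^3/6 - t^4/4) has_real_derivative (3 * x^2/6 - 4*x^3/4)) (at x within {0..1/2})"
      by (auto intro!: derivative_eq_intros)
    moreover have "3 * x^2/6 - 4*x^3/4 = x^2 * (1/2 - x)" by (simp add: power2_eq_square power3_eq_cube algebra_simps)
    ultimately show "((\<lambda>t::real. t^3/6 - t^4/4) has_vector_derivative x^2 * (1/2 - x)) (at x within {0..1/2})"
      by (simp add: has_real_derivative_iff_has_vector_derivative)
  qed simp
  then show ?thesis by (simp add: power_divide)
qed

lemma powr_combine:
  fixes D c Q q :: real
  assumes "D > 0" "c > 0" "Q \<ge> 0"
  shows "(D*c) powr (1 - 1/q) * (D*Q) powr (1/q) = D * (c powr (1 - 1/q) * Q powr (1/q))"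
proof -
  have "(D*c) powr (1 - 1/q) * (D*Q) powr (1/q) = (D powr (1 - 1/q) * D powr (1/q)) * (c powr (1 - 1/q) * Q powr (1/q))"
    using assms by (simp add: powr_mult)
  also have "D powr (1 - 1/q) * D powr (1/q) = D powr (1 - 1/q + 1/q)" by (rule powr_add[symmetric])
  also have "\<dots> = D" using assms by simp
  finally show ?thesis .
qed




lemma kpoly_gen: fixes u d :: real assumes "d \<noteq> 0"
  shows "d^3/6 * ((u/d)\<^sup>2 * (1/2 - u/d)) = u\<^sup>2 * (d/2 - u) / 6"
  using assms by (simp add: field_simps power2_eq_square power3_eq_cube)

theorem theorem3:
  fixes h f f1 f2 f3 :: "real \<Rightarrow> real"
    and J I :: "real set"
    and a b q :: real
  assumes J_int: "is_interval J" and J_sub: "{0..1} \<subseteq> J"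
    and h_nonneg: "\<forall>t\<in>J. 0 \<le> h t"
    and h_int: "h absolutely_integrable_on {0..1}"
    and I_open: "open I" and I_int: "is_interval I" and I_sub: "I \<subseteq> {0..}"
    and a_in: "a \<in> I" and b_in: "b \<in> I" and ab: "a < b"
    and d1: "\<forall>x\<in>I. (f has_real_derivative f1 x) (at x)"
    and d2: "\<forall>x\<in>I. (f1 has_real_derivative f2 x) (at x)"
    and d3: "\<forall>x\<in>I. (f2 has_real_derivative f3 x) (at x)"
    and f3_L1: "f3 absolutely_integrable_on {a..b}"
    and q: "q > 1"
    and hconv: "h_convex_on h a b (\<lambda>x. \<bar>f3 x\<bar> powr q)"
  shows "\<bar>integral {a..b} f - (b - a) / 6 * (f a + 4 * f ((a + b) / 2) + f b)\<bar>
    \<le> (b - a) ^ 4 / 6 * (1 / 192) powr (1 - 1 / q) *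
       ((integral {0..1/2} (\<lambda>t. t\<^sup>2 * (1/2 - t) * h t) * \<bar>f3 a\<bar> powr q
          + integral {0..1/2} (\<lambda>t. t\<^sup>2 * (1/2 - t) * h (1 - t)) * \<bar>f3 b\<bar> powr q) powr (1 / q)
      + (integral {0..1/2} (\<lambda>t. t\<^sup>2 * (1/2 - t) * h (1 - t)) * \<bar>f3 a\<bar> powr q
          + integral {0..1/2} (\<lambda>t. t\<^sup>2 * (1/2 - t) * h t) * \<bar>f3 b\<bar> powr q) powr (1 / q))"
proof -
  define m where "m = (a+b)/2"
  define g where "g x = \<bar>f3 x\<bar> powr q" for x
  define K1 where "K1 = integral {0..1/2} (\<lambda>t. t\<^sup>2 * (1/2 - t) * h t)"
  define K2 where "K2 = integral {0..1/2} (\<lambda>t. t\<^sup>2 * (1/2 - t) * h (1 - t))"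
  define D where "D = (b-a)^4/6"
  define c where "c = (1/192::real)"
  have ba: "b - a > 0" "b - a \<noteq> 0" using ab by auto
  have am: "a < m" "m < b" using ab by (auto simp: m_def)
  have abI: "{a..b} \<subseteq> I" using I_int a_in b_in unfolding is_interval_1 by (meson atLeastAtMost_iff subsetI)
  have h0: "\<And>t. t \<in> {0..1} \<Longrightarrow> 0 \<le> h t" using h_nonneg J_sub by auto
  have hI: "h integrable_on {0..1}" using h_int by (simp add: absolutely_integrable_on_def)
  have hr: "(\<lambda>t. h (1 - t)) absolutely_integrable_on {0..1}"
  proof (rule nonnegative_absolutely_integrable_1)
    show "(\<lambda>t. h (1 - t)) integrable_on {0..1}"
      using reflect01[OF integrable_integral[OF hI]] by (rule has_integral_integrable)
    fix t :: real assume "t \<in> {0..1}" then show "0 \<le> h (1 - t)" using h0 by auto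
  qed
  have sub01: "{0..1/2} \<subseteq> {0..(1::real)}" by auto
  have pc: "continuous_on {0..1/2} (\<lambda>t::real. t\<^sup>2 * (1/2 - t))" by (intro continuous_intros)
  have iK1: "((\<lambda>t. t\<^sup>2 * (1/2 - t) * h t) has_integral K1) {0..1/2}"
    unfolding K1_def
    using cont_times_abs[OF pc absolutely_integrable_on_subinterval[OF h_int sub01]]
    by (intro integrable_integral) (simp add: absolutely_integrable_on_def)
  have iK2: "((\<lambda>t. t\<^sup>2 * (1/2 - t) * h (1 - t)) has_integral K2) {0..1/2}"
    unfolding K2_def
    using cont_times_abs[OF pc absolutely_integrable_on_subinterval[OF hr sub01]]
    by (intro integrable_integral) (simp add: absolutely_integrable_on_def)
  have K1p: "K1 \<ge> 0"
    by (rule has_integral_nonneg[OF iK1]) (use h0 in auto)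
  have K2p: "K2 \<ge> 0"
    by (rule has_integral_nonneg[OF iK2]) (use h0 in auto)
  have g0: "\<And>x. g x \<ge> 0" by (simp add: g_def)
  define k where "k x = (x-a)^2*(m-x)/6" for x
  define l where "l x = (b-x)^2*(m-x)/6" for x
  have ik: "((\<lambda>x. k x * f3 x) has_integral
     ((k m * f2 m - ((2*(m-a)*(m-m) - (m-a)^2)/6) * f1 m + ((2*(m-m) - 4*(m-a))/6) * f m)
      - (k a * f2 a - ((2*(a-a)*(m-a) - (a-a)^2)/6) * f1 a + ((2*(m-a) - 4*(a-a))/6) * f a)
      + integral {a..m} f)) {a..m}"
  proof (rule ftc3[OF _ _ d1 d2 d3])
    show "{a..m} \<subseteq> I" using abI am by auto
    show "a \<le> m" using am by simp
    fix x :: real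
    show "(k has_real_derivative (2*(x-a)*(m-x) - (x-a)^2)/6) (at x)"
      unfolding k_def by (auto intro!: derivative_eq_intros simp: field_simps power2_eq_square)
    show "((\<lambda>x. (2*(x-a)*(m-x) - (x-a)^2)/6) has_real_derivative (2*(m-x) - 4*(x-a))/6) (at x)"
      by (auto intro!: derivative_eq_intros simp: field_simps power2_eq_square)
    show "((\<lambda>x. (2*(m-x) - 4*(x-a))/6) has_real_derivative -1) (at x)"
      by (auto intro!: derivative_eq_intros simp: field_simps)
  qed
  have il: "((\<lambda>x. l x * f3 x) has_integral
     ((l b * f2 b - ((-2*(b-b)*(m-b) - (b-b)^2)/6) * f1 b + ((2*(m-b) + 4*(b-b))/6) * f b)
      - (l m * f2 m - ((-2*(b-m)*(m-m) - (b-m)^2)/6) * f1 m + ((2*(m-m) + 4*(b-m))/6) * f m)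
      + integral {m..b} f)) {m..b}"
  proof (rule ftc3[OF _ _ d1 d2 d3])
    show "{m..b} \<subseteq> I" using abI am by auto
    show "m \<le> b" using am by simp
    fix x :: real
    show "(l has_real_derivative (-2*(b-x)*(m-x) - (b-x)^2)/6) (at x)"
      unfolding l_def by (auto intro!: derivative_eq_intros simp: field_simps power2_eq_square)
    show "((\<lambda>x. (-2*(b-x)*(m-x) - (b-x)^2)/6) has_real_derivative (2*(m-x) + 4*(b-x))/6) (at x)"
      by (auto intro!: derivative_eq_intros simp: field_simps power2_eq_square)
    show "((\<lambda>x. (2*(m-x) + 4*(b-x))/6) has_real_derivative -1) (at x)"
      by (auto intro!: derivative_eq_intros simp: field_simps)
  qed
  have fcont: "continuous_on {a..b} f"
  proof (rule continuous_at_imp_continuous_on, rule ballI)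
    fix x assume "x \<in> {a..b}"
    then have "x \<in> I" using abI by auto
    then show "isCont f x" using d1 DERIV_isCont by blast
  qed
  have fsplit: "integral {a..b} f = integral {a..m} f + integral {m..b} f"
    using am by (intro Henstock_Kurzweil_Integration.integral_combine[symmetric] integrable_continuous_real fcont) auto
  define P1 where "P1 = integral {a..m} (\<lambda>x. k x * f3 x)"
  define P2 where "P2 = integral {m..b} (\<lambda>x. l x * f3 x)"
  have Eq: "integral {a..b} f - (b - a) / 6 * (f a + 4 * f ((a + b) / 2) + f b) = P1 + P2"
    unfolding P1_def P2_def integral_unique[OF ik] integral_unique[OF il] fsplit
    by (simp add: k_def l_def m_def field_simps power2_eq_square)
  define H where "H x = h ((b-x)/(b-a)) * g a + h ((x-a)/(b-a)) * g b" for x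
  have FH: "\<bar>f3 x\<bar> powr q \<le> H x" if x: "x \<in> {a..b}" for x
  proof -
    define t where "t = (b-x)/(b-a)"
    have t: "t \<in> {0..1}" using x ba by (auto simp: t_def field_simps)
    have "g (t * a + (1 - t) * b) \<le> h t * g a + h (1 - t) * g b"
      using hconv t ab unfolding h_convex_on_def g_def by auto
    moreover have "t * a + (1 - t) * b = x"
    proof -
      have "t * (b-a) = b - x" using ba by (simp add: t_def)
      moreover have "t * a + (1 - t) * b = b - t * (b-a)" by (simp add: algebra_simps)
      ultimately show ?thesis by simp
    qed
    moreover have "1 - t = (x-a)/(b-a)" using ba by (simp add: t_def field_simps)
    ultimately show ?thesis by (simp add: H_def g_def t_def)
  qed
  have f3m: "f3 absolutely_integrable_on {a..m}"
    using am by (intro absolutely_integrable_on_subinterval[OF f3_L1]) auto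
  have f3m2: "f3 absolutely_integrable_on {m..b}"
    using am by (intro absolutely_integrable_on_subinterval[OF f3_L1]) auto
  have kpoly: "(b-a)^3/6 * (((x-a)/(b-a))\<^sup>2 * (1/2 - (x-a)/(b-a))) = k x" for x
  proof -
    have e: "(b-a)/2 - (x-a) = m - x" by (simp add: m_def field_simps)
    show ?thesis using kpoly_gen[OF ba(2), of "x-a"] unfolding e k_def .
  qed
  have iA1: "(k has_integral D * c) {a..m}"
  proof -
    have "((\<lambda>t. (b-a)^3/6 * (t\<^sup>2 * (1/2 - t))) has_integral ((b-a)^3/6 * (1/192))) {0..1/2}"
      by (rule has_integral_mult_right[OF poly_int])
    note F = sub_left[OF this ab]
    have fe: "(\<lambda>x. (b-a)^3/6 * (((x-a)/(b-a))\<^sup>2 * (1/2 - (x-a)/(b-a)))) = k" by (rule ext, rule kpoly)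
    have v: "(b-a) * ((b-a)^3/6 * (1/192)) = D*c" by (simp add: D_def c_def eval_nat_numeral)
    show ?thesis using F unfolding fe v m_def[symmetric] .
  qed
  have e1: "1 - (x-a)/(b-a) = (b-x)/(b-a)" for x using ba by (simp add: field_simps)
  have iC1: "((\<lambda>x. k x * H x) has_integral D * (K2 * g a + K1 * g b)) {a..m}"
  proof -
    have "((\<lambda>t. (b-a)^3/6 * ((t\<^sup>2 * (1/2 - t) * h (1 - t)) * g a + (t\<^sup>2 * (1/2 - t) * h t) * g b))
        has_integral ((b-a)^3/6 * (K2 * g a + K1 * g b))) {0..1/2}"
      by (intro has_integral_mult_right has_integral_add has_integral_mult_left iK1 iK2)
    moreover have "(\<lambda>t. (b-a)^3/6 * ((t\<^sup>2 * (1/2 - t) * h (1 - t)) * g a + (t\<^sup>2 * (1/2 - t) * h t) * g b))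
       = (\<lambda>t. ((b-a)^3/6 * (t\<^sup>2 * (1/2 - t))) * (h (1 - t) * g a + h t * g b))"
      by (rule ext) (simp add: algebra_simps)
    ultimately have "((\<lambda>t. ((b-a)^3/6 * (t\<^sup>2 * (1/2 - t))) * (h (1 - t) * g a + h t * g b))
        has_integral ((b-a)^3/6 * (K2 * g a + K1 * g b))) {0..1/2}" by simp
    note F = sub_left[OF this ab]
    have v: "(b-a) * ((b-a)^3/6 * (K2 * g a + K1 * g b)) = D * (K2 * g a + K1 * g b)"
      by (simp add: D_def eval_nat_numeral)
    show ?thesis using F unfolding kpoly e1 v m_def[symmetric] H_def .
  qed
  have iF1: "(\<lambda>x. k x * \<bar>f3 x\<bar>) absolutely_integrable_on {a..m}"
    by (rule cont_times_abs[OF _ abs_abs_int[OF f3m]]) (auto simp: k_def intro!: continuous_intros)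
  have k0: "k x \<ge> 0" if "x \<in> {a..m}" for x using that by (simp add: k_def)
  have B1: "\<bar>P1\<bar> \<le> integral {a..m} (\<lambda>x. k x * \<bar>f3 x\<bar>)"
    unfolding P1_def real_norm_def[symmetric]
    by (rule integral_norm_bound_integral[OF has_integral_integrable[OF ik]])
      (use iF1 k0 in \<open>auto simp: absolutely_integrable_on_def abs_mult\<close>)
  have B1': "integral {a..m} (\<lambda>x. k x * \<bar>f3 x\<bar>) \<le> (D*c) powr (1 - 1/q) * (D * (K2 * g a + K1 * g b)) powr (1/q)"
  proof (rule holder_like[OF q _ iA1 _ iC1])
    show "(\<lambda>x. k x * \<bar>f3 x\<bar>) integrable_on {a..m}" using iF1 by (simp add: absolutely_integrable_on_def)
    show "D * c > 0" using ba by (simp add: D_def c_def)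
  qed (use k0 FH am in auto)
  define w where "w x = (b-x)^2*(x-m)/6" for x
  have lpoly: "(b-a)^3/6 * (((b-x)/(b-a))\<^sup>2 * (1/2 - (b-x)/(b-a))) = w x" for x
  proof -
    have e: "(b-a)/2 - (b-x) = x - m" by (simp add: m_def field_simps)
    show ?thesis using kpoly_gen[OF ba(2), of "b-x"] unfolding e w_def .
  qed
  have e2: "1 - (b-x)/(b-a) = (x-a)/(b-a)" for x using ba by (simp add: field_simps)
  have iA2: "(w has_integral D * c) {m..b}"
  proof -
    have "((\<lambda>t. (b-a)^3/6 * (t\<^sup>2 * (1/2 - t))) has_integral ((b-a)^3/6 * (1/192))) {0..1/2}"
      by (rule has_integral_mult_right[OF poly_int])
    note F = sub_right[OF this ab]
    have fe: "(\<lambda>x. (b-a)^3/6 * (((b-x)/(b-a))\<^sup>2 * (1/2 - (b-x)/(b-a)))) = w" by (rule ext, rule lpoly)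
    have v: "(b-a) * ((b-a)^3/6 * (1/192)) = D*c" by (simp add: D_def c_def eval_nat_numeral)
    show ?thesis using F unfolding fe v m_def[symmetric] .
  qed
  have iC2: "((\<lambda>x. w x * H x) has_integral D * (K1 * g a + K2 * g b)) {m..b}"
  proof -
    have "((\<lambda>t. (b-a)^3/6 * ((t\<^sup>2 * (1/2 - t) * h t) * g a + (t\<^sup>2 * (1/2 - t) * h (1 - t)) * g b))
        has_integral ((b-a)^3/6 * (K1 * g a + K2 * g b))) {0..1/2}"
      by (intro has_integral_mult_right has_integral_add has_integral_mult_left iK1 iK2)
    moreover have "(\<lambda>t. (b-a)^3/6 * ((t\<^sup>2 * (1/2 - t) * h t) * g a + (t\<^sup>2 * (1/2 - t) * h (1 - t)) * g b))
       = (\<lambda>t. ((b-a)^3/6 * (t\<^sup>2 * (1/2 - t))) * (h t * g a + h (1 - t) * g b))"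
      by (rule ext) (simp add: algebra_simps)
    ultimately have "((\<lambda>t. ((b-a)^3/6 * (t\<^sup>2 * (1/2 - t))) * (h t * g a + h (1 - t) * g b))
        has_integral ((b-a)^3/6 * (K1 * g a + K2 * g b))) {0..1/2}" by simp
    note F = sub_right[OF this ab]
    have v: "(b-a) * ((b-a)^3/6 * (K1 * g a + K2 * g b)) = D * (K1 * g a + K2 * g b)"
      by (simp add: D_def eval_nat_numeral)
    show ?thesis using F unfolding lpoly e2 v m_def[symmetric] H_def .
  qed
  have iF2: "(\<lambda>x. w x * \<bar>f3 x\<bar>) absolutely_integrable_on {m..b}"
    by (rule cont_times_abs[OF _ abs_abs_int[OF f3m2]]) (auto simp: w_def intro!: continuous_intros)
  have w0: "w x \<ge> 0" if "x \<in> {m..b}" for x using that by (simp add: w_def)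
  have lw: "l x = - w x" for x by (simp add: l_def w_def field_simps)
  have B2: "\<bar>P2\<bar> \<le> integral {m..b} (\<lambda>x. w x * \<bar>f3 x\<bar>)"
    unfolding P2_def real_norm_def[symmetric]
    by (rule integral_norm_bound_integral[OF has_integral_integrable[OF il]])
      (use iF2 w0 in \<open>auto simp: absolutely_integrable_on_def abs_mult lw\<close>)
  have B2': "integral {m..b} (\<lambda>x. w x * \<bar>f3 x\<bar>) \<le> (D*c) powr (1 - 1/q) * (D * (K1 * g a + K2 * g b)) powr (1/q)"
  proof (rule holder_like[OF q _ iA2 _ iC2])
    show "(\<lambda>x. w x * \<bar>f3 x\<bar>) integrable_on {m..b}" using iF2 by (simp add: absolutely_integrable_on_def)
    show "D * c > 0" using ba by (simp add: D_def c_def)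
  qed (use w0 FH am in auto)
  have Dp: "D > 0" "c > 0" using ba by (auto simp: D_def c_def)
  have Q1: "K2 * g a + K1 * g b \<ge> 0" "K1 * g a + K2 * g b \<ge> 0" using K1p K2p g0 by auto
  have P1b: "\<bar>P1\<bar> \<le> D * (c powr (1 - 1/q) * (K2 * g a + K1 * g b) powr (1/q))"
    using B1 B1' powr_combine[OF Dp Q1(1), of q] by linarith
  have P2b: "\<bar>P2\<bar> \<le> D * (c powr (1 - 1/q) * (K1 * g a + K2 * g b) powr (1/q))"
    using B2 B2' powr_combine[OF Dp Q1(2), of q] by linarith
  have fin: "\<bar>integral {a..b} f - (b - a) / 6 * (f a + 4 * f ((a + b) / 2) + f b)\<bar>
     \<le> D * c powr (1 - 1/q) * ((K1 * g a + K2 * g b) powr (1/q) + (K2 * g a + K1 * g b) powr (1/q))"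
  proof -
    have "D * c powr (1 - 1/q) * ((K1 * g a + K2 * g b) powr (1/q) + (K2 * g a + K1 * g b) powr (1/q))
      = D * (c powr (1 - 1/q) * (K2 * g a + K1 * g b) powr (1/q)) + D * (c powr (1 - 1/q) * (K1 * g a + K2 * g b) powr (1/q))"
      by (simp add: algebra_simps)
    then show ?thesis unfolding Eq using P1b P2b abs_triangle_ineq[of P1 P2] by linarith
  qed
  show ?thesis using fin unfolding D_def c_def K1_def K2_def g_def .
qed


end
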